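(* Let $\delta>0$, $t\in(0,1]$, and let $c>0$ be a fixed constant. There is a constant $C$ (depending only on $c$) such that for all positive integers $m,n$ with $n\ge2$ and $\max\{m/n,n/m\}\le c$, $$\mathrm{GW}(\mathcal{M}^{\mathrm{nbr}}(m,n,\delta,t)) \leq C\big(\delta(\log n)^2 + t\big).$$
   Context: $\mathcal{M}^{\mathrm{nbr}}(m,n,\delta,t) = \{\theta\in\mathbb{R}^{m\times n}: \mathrm{TV}(\theta)\le\delta,\ \|\theta\|\le t\}$, where $\mathrm{TV}$ is the unnormalized total variation (sum of absolute differences over horizontally/vertically adjacent entries) and $\|\cdot\|$ the Frobenius norm. $\mathrm{GW}(A) = \mathbb{E}\sup_{v\in A}\langle Z,v\rangle$ with $Z$ an $m\times n$ matrix of i.i.d. standard normals. *)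

theory Defs
  imports "HOL-Probability.Probability"
begin

text \<open>An m x n real matrix is represented as a function on index pairs
  (i,j) with i < m, j < n (0-based), vanishing outside this index set.\<close>

definition idx :: "nat \<Rightarrow> nat \<Rightarrow> (nat \<times> nat) set" where
  "idx m n = {..<m} \<times> {..<n}"

definition is_matrix :: "nat \<Rightarrow> nat \<Rightarrow> (nat \<times> nat \<Rightarrow> real) \<Rightarrow> bool" where
  "is_matrix m n \<theta> \<longleftrightarrow> (\<forall>p. p \<notin> idx m n \<longrightarrow> \<theta> p = 0)"

text \<open>Unnormalized (anisotropic) total variation: sum of absolute differences
  over horizontally and vertically adjacent entries.\<close>
definition TV :: "nat \<Rightarrow> nat \<Rightarrow> (nat \<times> nat \<Rightarrow> real) \<Rightarrow> real" where
  "TV m n \<theta> =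
     (\<Sum>i<m. \<Sum>j\<in>{j. j + 1 < n}. \<bar>\<theta> (i, j + 1) - \<theta> (i, j)\<bar>)
   + (\<Sum>i\<in>{i. i + 1 < m}. \<Sum>j<n. \<bar>\<theta> (i + 1, j) - \<theta> (i, j)\<bar>)"

definition frob :: "nat \<Rightarrow> nat \<Rightarrow> (nat \<times> nat \<Rightarrow> real) \<Rightarrow> real" where
  "frob m n \<theta> = sqrt (\<Sum>p\<in>idx m n. (\<theta> p)\<^sup>2)"

definition minner :: "nat \<Rightarrow> nat \<Rightarrow> (nat \<times> nat \<Rightarrow> real) \<Rightarrow> (nat \<times> nat \<Rightarrow> real) \<Rightarrow> real" where
  "minner m n Z v = (\<Sum>p\<in>idx m n. Z p * v p)"

definition M_nbr :: "nat \<Rightarrow> nat \<Rightarrow> real \<Rightarrow> real \<Rightarrow> (nat \<times> nat \<Rightarrow> real) set" where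
  "M_nbr m n \<delta> t = {\<theta>. is_matrix m n \<theta> \<and> TV m n \<theta> \<le> \<delta> \<and> frob m n \<theta> \<le> t}"

definition gauss_mat :: "nat \<Rightarrow> nat \<Rightarrow> (nat \<times> nat \<Rightarrow> real) measure" where
  "gauss_mat m n = PiM (idx m n) (\<lambda>_. std_normal_distribution)"

definition GW :: "nat \<Rightarrow> nat \<Rightarrow> (nat \<times> nat \<Rightarrow> real) set \<Rightarrow> real" where
  "GW m n A = (\<integral>Z. (SUP v\<in>A. minner m n Z v) \<partial>gauss_mat m n)"

end

theory Submission
  imports Defs "HOL-Analysis.Harmonic_Numbers"
begin

lemma std_normal_exp:
  fixes a :: real
  shows "integrable std_normal_distribution (\<lambda>x. exp (a * x))"
    and "(\<integral>x. exp (a * x) \<partial>std_normal_distribution) = exp (a\<^sup>2 / 2)"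
proof -
  have eq: "\<And>x. std_normal_density x * exp (a * x) = exp (a\<^sup>2 / 2) * normal_density a 1 x"
    by (simp add: normal_density_def mult_exp_exp power2_eq_square field_simps flip: exp_add)
  have i1: "integrable lborel (\<lambda>x. std_normal_density x *\<^sub>R exp (a * x))"
    using eq by simp
  show "integrable std_normal_distribution (\<lambda>x. exp (a * x))"
    by (subst integrable_density) (use i1 in auto)
  have "(\<integral>x. exp (a * x) \<partial>std_normal_distribution) = (\<integral>x. std_normal_density x *\<^sub>R exp (a * x) \<partial>lborel)"
    by (subst integral_density) auto
  also have "\<dots> = exp (a\<^sup>2 / 2)" using eq by simp
  finally show "(\<integral>x. exp (a * x) \<partial>std_normal_distribution) = exp (a\<^sup>2 / 2)" .
qed

definition gsum :: "(nat \<times> nat) set \<Rightarrow> (nat \<times> nat \<Rightarrow> real) \<Rightarrow> real" where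
  "gsum B Z = (\<Sum>p\<in>B. Z p)"

definition gnorm :: "(nat \<times> nat) set \<Rightarrow> (nat \<times> nat \<Rightarrow> real) \<Rightarrow> real" where
  "gnorm B Z = gsum B Z / sqrt (real (card B))"

lemma finite_idx[simp]: "finite (idx m n)"
  by (simp add: idx_def)

lemma prob_space_gauss: "prob_space (gauss_mat m n)"
  unfolding gauss_mat_def by (rule prob_space_PiM) (auto intro: prob_space_normal_density)

lemma coord_meas:
  assumes "p \<in> idx m n"
  shows "(\<lambda>Z. Z p) \<in> borel_measurable (gauss_mat m n)"
proof -
  have "(\<lambda>Z. Z p) \<in> measurable (gauss_mat m n) std_normal_distribution"
    unfolding gauss_mat_def using assms by (rule measurable_component_singleton)
  then show ?thesis
    using measurable_cong_sets[OF refl, of std_normal_distribution borel "gauss_mat m n"] by simp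
qed

lemma gsum_meas:
  assumes "B \<subseteq> idx m n"
  shows "gsum B \<in> borel_measurable (gauss_mat m n)"
proof -
  have "(\<lambda>Z. \<Sum>p\<in>B. Z p) \<in> borel_measurable (gauss_mat m n)"
    using assms coord_meas by (intro borel_measurable_sum) auto
  then show ?thesis unfolding gsum_def[abs_def] .
qed

lemma gnorm_meas:
  assumes "B \<subseteq> idx m n"
  shows "gnorm B \<in> borel_measurable (gauss_mat m n)"
  unfolding gnorm_def[abs_def] using gsum_meas[OF assms] by measurable

lemma gsum_exp:
  assumes B: "B \<subseteq> idx m n"
  shows "integrable (gauss_mat m n) (\<lambda>Z. exp (a * gsum B Z))"
    and "(\<integral>Z. exp (a * gsum B Z) \<partial>gauss_mat m n) = exp (a\<^sup>2 * real (card B) / 2)"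
proof -
  interpret product_sigma_finite "\<lambda>_::nat\<times>nat. std_normal_distribution"
    unfolding product_sigma_finite_def by (auto intro!: prob_space_imp_sigma_finite prob_space_normal_density)
  define f where "f = (\<lambda>p::nat\<times>nat. \<lambda>x::real. if p \<in> B then exp (a * x) else 1)"
  have fi: "\<And>p. integrable std_normal_distribution (f p)"
  proof -
    fix p
    interpret prob_space std_normal_distribution by (auto intro: prob_space_normal_density)
    show "integrable std_normal_distribution (f p)"
      unfolding f_def using std_normal_exp(1)[of a] by (cases "p \<in> B") auto
  qed
  have fint: "\<And>p. integral\<^sup>L std_normal_distribution (f p) = (if p \<in> B then exp (a\<^sup>2 / 2) else 1)"
  proof -
    fix p
    interpret prob_space std_normal_distribution by (auto intro: prob_space_normal_density)
    show "integral\<^sup>L std_normal_distribution (f p) = (if p \<in> B then exp (a\<^sup>2 / 2) else 1)"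
      unfolding f_def using std_normal_exp(2)[of a] prob_space by (cases "p \<in> B") auto
  qed
  have finB: "finite B" using B finite_subset finite_idx by blast
  have eq: "\<And>Z. (\<Prod>p\<in>idx m n. f p (Z p)) = exp (a * gsum B Z)"
  proof -
    fix Z :: "nat \<times> nat \<Rightarrow> real"
    have "(\<Prod>p\<in>idx m n. f p (Z p)) = (\<Prod>p\<in>B. exp (a * Z p))"
      unfolding f_def using B by (simp add: prod.If_cases Int_absorb1)
    also have "\<dots> = exp (a * gsum B Z)"
      unfolding gsum_def by (simp add: exp_sum finB sum_distrib_left)
    finally show "(\<Prod>p\<in>idx m n. f p (Z p)) = exp (a * gsum B Z)" .
  qed
  have "integrable (gauss_mat m n) (\<lambda>Z. \<Prod>p\<in>idx m n. f p (Z p))"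
    unfolding gauss_mat_def by (rule product_integrable_prod) (auto intro: fi)
  then show "integrable (gauss_mat m n) (\<lambda>Z. exp (a * gsum B Z))" using eq by simp
  have "(\<integral>Z. (\<Prod>p\<in>idx m n. f p (Z p)) \<partial>gauss_mat m n) = (\<Prod>p\<in>idx m n. integral\<^sup>L std_normal_distribution (f p))"
    unfolding gauss_mat_def by (rule product_integral_prod) (auto intro: fi)
  also have "\<dots> = (\<Prod>p\<in>B. exp (a\<^sup>2 / 2))"
    unfolding fint using B by (simp add: prod.If_cases Int_absorb1)
  also have "\<dots> = exp (a\<^sup>2 * real (card B) / 2)"
    by (simp add: exp_of_nat_mult[symmetric] field_simps)
  finally show "(\<integral>Z. exp (a * gsum B Z) \<partial>gauss_mat m n) = exp (a\<^sup>2 * real (card B) / 2)"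
    using eq by simp
qed

lemma exp_half_le: "exp (1/2::real) \<le> 2"
proof -
  have "exp (1/2::real) ^ 2 = exp 1" by (simp flip: exp_of_nat_mult)
  also have "\<dots> \<le> 4" using exp_le by simp
  finally have "exp (1/2::real) ^ 2 \<le> 2 ^ 2" by simp
  then show ?thesis by (rule power2_le_imp_le) simp
qed

lemma exp_abs_le: "exp \<bar>y::real\<bar> \<le> exp y + exp (-y)"
proof (cases "y \<ge> 0")
  case True then show ?thesis using exp_gt_zero[of "-y"] by simp
next
  case False then show ?thesis using exp_gt_zero[of y] by simp
qed

lemma gnorm_exp_abs:
  assumes B: "B \<subseteq> idx m n"
  shows "integrable (gauss_mat m n) (\<lambda>Z. exp \<bar>gnorm B Z\<bar>)"
    and "(\<integral>Z. exp \<bar>gnorm B Z\<bar> \<partial>gauss_mat m n) \<le> 4"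
proof -
  define a where "a = 1 / sqrt (real (card B))"
  have gn: "\<And>Z. gnorm B Z = a * gsum B Z" unfolding gnorm_def a_def by simp
  have ae: "exp (a\<^sup>2 * real (card B) / 2) \<le> exp (1/2)"
    by (cases "card B = 0") (auto simp: a_def power_divide)
  have ae2: "exp ((-a)\<^sup>2 * real (card B) / 2) \<le> exp (1/2)" using ae by simp
  have i1: "integrable (gauss_mat m n) (\<lambda>Z. exp (a * gsum B Z) + exp ((-a) * gsum B Z))"
    using gsum_exp(1)[OF B, of a] gsum_exp(1)[OF B, of "-a"] by auto
  have bnd: "exp \<bar>gnorm B Z\<bar> \<le> exp (a * gsum B Z) + exp ((-a) * gsum B Z)" for Z
    unfolding gn using exp_abs_le[of "a * gsum B Z"] by simp
  show i2: "integrable (gauss_mat m n) (\<lambda>Z. exp \<bar>gnorm B Z\<bar>)"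
    by (rule Bochner_Integration.integrable_bound[OF i1]) (use gnorm_meas[OF B] bnd in auto)
  have "(\<integral>Z. exp \<bar>gnorm B Z\<bar> \<partial>gauss_mat m n) \<le> (\<integral>Z. exp (a * gsum B Z) + exp ((-a) * gsum B Z) \<partial>gauss_mat m n)"
    by (rule integral_mono[OF i2 i1 bnd])
  also have "\<dots> = exp (a\<^sup>2 * real (card B) / 2) + exp ((-a)\<^sup>2 * real (card B) / 2)"
    using gsum_exp[OF B, of a] gsum_exp[OF B, of "-a"] by (subst Bochner_Integration.integral_add) auto
  also have "\<dots> \<le> 4" using ae ae2 exp_half_le by linarith
  finally show "(\<integral>Z. exp \<bar>gnorm B Z\<bar> \<partial>gauss_mat m n) \<le> 4" .
qed

lemma gnorm_abs:
  assumes B: "B \<subseteq> idx m n"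
  shows "integrable (gauss_mat m n) (\<lambda>Z. \<bar>gnorm B Z\<bar>)"
    and "(\<integral>Z. \<bar>gnorm B Z\<bar> \<partial>gauss_mat m n) \<le> 4"
proof -
  have bnd: "\<bar>gnorm B Z\<bar> \<le> exp \<bar>gnorm B Z\<bar>" for Z
    using exp_ge_add_one_self[of "\<bar>gnorm B Z\<bar>"] by linarith
  show i: "integrable (gauss_mat m n) (\<lambda>Z. \<bar>gnorm B Z\<bar>)"
    by (rule Bochner_Integration.integrable_bound[OF gnorm_exp_abs(1)[OF B]]) (use gnorm_meas[OF B] bnd in auto)
  have "(\<integral>Z. \<bar>gnorm B Z\<bar> \<partial>gauss_mat m n) \<le> (\<integral>Z. exp \<bar>gnorm B Z\<bar> \<partial>gauss_mat m n)"
    by (rule integral_mono[OF i gnorm_exp_abs(1)[OF B] bnd])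
  then show "(\<integral>Z. \<bar>gnorm B Z\<bar> \<partial>gauss_mat m n) \<le> 4" using gnorm_exp_abs(2)[OF B] by linarith
qed

lemma gnorm_pos:
  assumes B: "B \<subseteq> idx m n"
  shows "integrable (gauss_mat m n) (\<lambda>Z. max (\<bar>gnorm B Z\<bar> - s) 0)"
    and "(\<integral>Z. max (\<bar>gnorm B Z\<bar> - s) 0 \<partial>gauss_mat m n) \<le> 4 * exp (- s)"
proof -
  have bnd: "\<And>Z. max (\<bar>gnorm B Z\<bar> - s) 0 \<le> exp (- s) * exp \<bar>gnorm B Z\<bar>"
  proof -
    fix Z
    have "\<bar>gnorm B Z\<bar> - s \<le> exp (\<bar>gnorm B Z\<bar> - s)"
      using exp_ge_add_one_self[of "\<bar>gnorm B Z\<bar> - s"] by linarith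
    then show "max (\<bar>gnorm B Z\<bar> - s) 0 \<le> exp (- s) * exp \<bar>gnorm B Z\<bar>"
      by (simp add: mult_exp_exp)
  qed
  have i1: "integrable (gauss_mat m n) (\<lambda>Z. exp (- s) * exp \<bar>gnorm B Z\<bar>)"
    using gnorm_exp_abs(1)[OF B] by simp
  show i: "integrable (gauss_mat m n) (\<lambda>Z. max (\<bar>gnorm B Z\<bar> - s) 0)"
    by (rule Bochner_Integration.integrable_bound[OF i1]) (use gnorm_meas[OF B] bnd in auto)
  have "(\<integral>Z. max (\<bar>gnorm B Z\<bar> - s) 0 \<partial>gauss_mat m n) \<le> (\<integral>Z. exp (- s) * exp \<bar>gnorm B Z\<bar> \<partial>gauss_mat m n)"
    by (rule integral_mono[OF i i1 bnd])
  also have "\<dots> = exp (- s) * (\<integral>Z. exp \<bar>gnorm B Z\<bar> \<partial>gauss_mat m n)" by simp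
  also have "\<dots> \<le> exp (- s) * 4" using gnorm_exp_abs(2)[OF B] by simp
  finally show "(\<integral>Z. max (\<bar>gnorm B Z\<bar> - s) 0 \<partial>gauss_mat m n) \<le> 4 * exp (- s)" by simp
qed

definition lo :: "nat \<Rightarrow> nat \<Rightarrow> nat \<Rightarrow> nat" where
  "lo m k a = a * m div 2 ^ k"

definition Iv :: "nat \<Rightarrow> nat \<Rightarrow> nat \<Rightarrow> nat set" where
  "Iv m k a = {lo m k a ..< lo m k (Suc a)}"

lemma lo_mono: "a \<le> a' \<Longrightarrow> lo m k a \<le> lo m k a'"
  unfolding lo_def by (intro div_le_mono mult_le_mono1)

lemma lo_0[simp]: "lo m k 0 = 0" by (simp add: lo_def)

lemma lo_top[simp]: "lo m k (2 ^ k) = m" by (simp add: lo_def)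

lemma lo_double: "lo m (Suc k) (2 * a) = lo m k a"
  unfolding lo_def by (simp add: mult.assoc div_mult_mult1)

lemma lo_double2: "lo m (Suc k) (Suc (Suc (2 * a))) = lo m k (Suc a)"
proof -
  have "Suc (Suc (2 * a)) = 2 * Suc a" by simp
  then show ?thesis using lo_double[of m k "Suc a"] by simp
qed

lemma sum_intervals:
  assumes "mono (f::nat \<Rightarrow> nat)"
  shows "(\<Sum>a<N. sum g {f a..<f (Suc a)}) = sum g {f 0..<f N}"
proof (induction N)
  case 0 then show ?case by simp
next
  case (Suc N)
  have "f 0 \<le> f N" "f N \<le> f (Suc N)" using assms by (auto simp: mono_def)
  then show ?case using Suc by (simp add: sum.atLeastLessThan_concat)
qed

lemma partition_sum:
  "(\<Sum>a<2^k. \<Sum>i\<in>Iv m k a. g i) = (\<Sum>i<m. g i)"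
proof -
  have "mono (lo m k)" by (auto simp: mono_def intro: lo_mono)
  from sum_intervals[OF this, where N="2^k" and g=g] show ?thesis
    unfolding Iv_def by (simp add: lessThan_atLeast0)
qed

lemma Iv_split:
  "Iv m k a = Iv m (Suc k) (2 * a) \<union> Iv m (Suc k) (Suc (2 * a))"
  "Iv m (Suc k) (2 * a) \<inter> Iv m (Suc k) (Suc (2 * a)) = {}"
proof -
  have "lo m (Suc k) (2 * a) \<le> lo m (Suc k) (Suc (2 * a))"
       "lo m (Suc k) (Suc (2 * a)) \<le> lo m (Suc k) (Suc (Suc (2 * a)))"
    by (auto intro: lo_mono)
  then show "Iv m k a = Iv m (Suc k) (2 * a) \<union> Iv m (Suc k) (Suc (2 * a))"
    unfolding Iv_def lo_double lo_double2 by (auto simp: lo_double lo_double2)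
  show "Iv m (Suc k) (2 * a) \<inter> Iv m (Suc k) (Suc (2 * a)) = {}"
    unfolding Iv_def by auto
qed

lemma Iv_sub_child: "d < 2 \<Longrightarrow> Iv m (Suc k) (2 * a + d) \<subseteq> Iv m k a"
  using Iv_split(1)[of m k a] by (cases d) (auto simp: less_Suc_eq)

lemma Iv_sub: "a < 2 ^ k \<Longrightarrow> Iv m k a \<subseteq> {..<m}"
proof -
  assume "a < 2 ^ k"
  then have "lo m k (Suc a) \<le> lo m k (2 ^ k)" by (intro lo_mono) simp
  then show ?thesis unfolding Iv_def by auto
qed

lemma card_Iv: "card (Iv m k a) = lo m k (Suc a) - lo m k a"
  unfolding Iv_def by simp

lemma div_real_bounds: "real (x div d) \<le> real x / real d" "d > 0 \<Longrightarrow> real x / real d < real (x div d) + 1"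
proof -
  have f: "\<lfloor>real x / real d\<rfloor> = int (x div d)" by (rule floor_divide_of_nat_eq)
  have e: "real (x div d) = real_of_int \<lfloor>real x / real d\<rfloor>" using f by simp
  show "real (x div d) \<le> real x / real d" unfolding e by (rule of_int_floor_le)
  show "real x / real d < real (x div d) + 1" unfolding e by (rule real_of_int_floor_add_one_gt)
qed

lemma card_Iv_bounds:
  "real m / 2 ^ k - 1 < real (card (Iv m k a))"
  "real (card (Iv m k a)) < real m / 2 ^ k + 1"
proof -
  have mono: "lo m k a \<le> lo m k (Suc a)" by (intro lo_mono) simp
  have d: "(2::nat) ^ k > 0" by simp
  have e: "real (card (Iv m k a)) = real (Suc a * m div 2 ^ k) - real (a * m div 2 ^ k)"
    using mono unfolding card_Iv lo_def by (simp add: of_nat_diff)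
  have r1: "real (Suc a * m) / 2 ^ k = real (a * m) / 2^k + real m / 2 ^ k"
    by (simp add: field_simps)
  have a1: "real (Suc a * m div 2 ^ k) \<le> real (Suc a * m) / 2 ^ k"
    using div_real_bounds(1)[of "Suc a * m" "2^k"] by simp
  have a2: "real (Suc a * m) / 2 ^ k < real (Suc a * m div 2 ^ k) + 1"
    using div_real_bounds(2)[OF d, of "Suc a * m"] by simp
  have b1: "real (a * m div 2 ^ k) \<le> real (a * m) / 2 ^ k"
    using div_real_bounds(1)[of "a * m" "2^k"] by simp
  have b2: "real (a * m) / 2 ^ k < real (a * m div 2 ^ k) + 1"
    using div_real_bounds(2)[OF d, of "a * m"] by simp
  show "real m / 2 ^ k - 1 < real (card (Iv m k a))" using e r1 a2 b1 by linarith
  show "real (card (Iv m k a)) < real m / 2 ^ k + 1" using e r1 a1 b2 by linarith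
qed

lemma sum_double:
  "(\<Sum>a'<2 * (N::nat). h a') = (\<Sum>a<N. \<Sum>d<2. h (2 * a + d))"
  by (induction N) (auto simp: numeral_2_eq_2 algebra_simps)

definition blk :: "nat \<Rightarrow> nat \<Rightarrow> nat \<Rightarrow> nat \<Rightarrow> nat \<Rightarrow> (nat \<times> nat) set" where
  "blk m n k a b = Iv m k a \<times> Iv n k b"

definition avg :: "(nat \<times> nat \<Rightarrow> real) \<Rightarrow> (nat \<times> nat) set \<Rightarrow> real" where
  "avg \<theta> X = (\<Sum>p\<in>X. \<theta> p) / real (card X)"

definition SS :: "nat \<Rightarrow> nat \<Rightarrow> (nat \<times> nat \<Rightarrow> real) \<Rightarrow> (nat \<times> nat \<Rightarrow> real) \<Rightarrow> nat \<Rightarrow> real" where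
  "SS m n \<theta> Z k = (\<Sum>a<2^k. \<Sum>b<2^k. gsum (blk m n k a b) Z * avg \<theta> (blk m n k a b))"

lemma finite_Iv[simp]: "finite (Iv m k a)" by (simp add: Iv_def)
lemma finite_blk[simp]: "finite (blk m n k a b)" by (simp add: blk_def)

lemma gsum_prod: "gsum (R \<times> C) Z = (\<Sum>i\<in>R. \<Sum>j\<in>C. Z (i, j))"
  unfolding gsum_def by (simp add: sum.cartesian_product)

lemma SS_0: "SS m n \<theta> Z 0 = gsum (idx m n) Z * avg \<theta> (idx m n)"
proof -
  have "Iv m 0 0 = {..<m}" "Iv n 0 0 = {..<n}" unfolding Iv_def lo_def by auto
  then show ?thesis unfolding SS_def blk_def idx_def by simp
qed

lemma small_card_sum:
  assumes "finite X" "card X \<le> 1"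
  shows "gsum X Z * avg \<theta> X = (\<Sum>p\<in>X. Z p * \<theta> p)"
proof (cases "card X = 0")
  case True then have "X = {}" using assms by simp
  then show ?thesis by (simp add: gsum_def avg_def)
next
  case False then have "card X = 1" using assms by linarith
  then obtain p where "X = {p}" by (auto simp: card_Suc_eq)
  then show ?thesis by (simp add: gsum_def avg_def)
qed

lemma card_Iv_le1:
  assumes "m \<le> 2 ^ K"
  shows "card (Iv m K a) \<le> 1"
proof -
  have "real m / 2 ^ K \<le> 1" using assms by (simp add: divide_le_eq)
  then have "real (card (Iv m K a)) < 2" using card_Iv_bounds(2)[of m K a] by linarith
  then show ?thesis by simp
qed

lemma SS_top:
  assumes "m \<le> 2 ^ K" "n \<le> 2 ^ K"
  shows "SS m n \<theta> Z K = minner m n Z \<theta>"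
proof -
  have c: "card (blk m n K a b) \<le> 1" for a b
    unfolding blk_def card_cartesian_product
    using mult_le_mono[OF card_Iv_le1[OF assms(1)] card_Iv_le1[OF assms(2)]] by simp
  have "SS m n \<theta> Z K = (\<Sum>a<2^K. \<Sum>b<2^K. \<Sum>p\<in>blk m n K a b. Z p * \<theta> p)"
    unfolding SS_def using small_card_sum[OF finite_blk c] by simp
  also have "\<dots> = (\<Sum>a<2^K. \<Sum>b<2^K. \<Sum>i\<in>Iv m K a. \<Sum>j\<in>Iv n K b. Z (i, j) * \<theta> (i, j))"
    unfolding blk_def by (simp add: sum.cartesian_product)
  also have "\<dots> = (\<Sum>a<2^K. \<Sum>i\<in>Iv m K a. \<Sum>b<2^K. \<Sum>j\<in>Iv n K b. Z (i, j) * \<theta> (i, j))"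
    by (rule sum.cong[OF refl], rule sum.swap)
  also have "\<dots> = (\<Sum>i<m. \<Sum>j<n. Z (i, j) * \<theta> (i, j))"
    by (simp add: partition_sum)
  also have "\<dots> = minner m n Z \<theta>"
    unfolding minner_def idx_def by (simp add: sum.cartesian_product)
  finally show ?thesis .
qed

lemma sum2: "(\<Sum>d<2. g d) = g 0 + g (1::nat)"
  by (simp add: numeral_2_eq_2)

lemma gsum_split:
  "gsum (blk m n k a b) Z = (\<Sum>d<2. \<Sum>e<2. gsum (blk m n (Suc k) (2 * a + d) (2 * b + e)) Z)"
proof -
  have "gsum (blk m n k a b) Z = (\<Sum>i\<in>Iv m k a. \<Sum>j\<in>Iv n k b. Z (i, j))"
    unfolding blk_def gsum_prod ..
  also have "\<dots> = (\<Sum>i\<in>Iv m (Suc k) (2 * a) \<union> Iv m (Suc k) (Suc (2 * a)).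
          \<Sum>j\<in>Iv n (Suc k) (2 * b) \<union> Iv n (Suc k) (Suc (2 * b)). Z (i, j))"
    using Iv_split(1) by metis
  also have "\<dots> = (\<Sum>i\<in>Iv m (Suc k) (2 * a) \<union> Iv m (Suc k) (Suc (2 * a)).
          (\<Sum>j\<in>Iv n (Suc k) (2 * b). Z (i, j)) + (\<Sum>j\<in>Iv n (Suc k) (Suc (2 * b)). Z (i, j)))"
    by (rule sum.cong[OF refl], rule sum.union_disjoint) (auto simp: Iv_split(2))
  also have "\<dots> = (\<Sum>i\<in>Iv m (Suc k) (2 * a). (\<Sum>j\<in>Iv n (Suc k) (2 * b). Z (i, j)) + (\<Sum>j\<in>Iv n (Suc k) (Suc (2 * b)). Z (i, j)))
     + (\<Sum>i\<in>Iv m (Suc k) (Suc (2 * a)). (\<Sum>j\<in>Iv n (Suc k) (2 * b). Z (i, j)) + (\<Sum>j\<in>Iv n (Suc k) (Suc (2 * b)). Z (i, j)))"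
    by (rule sum.union_disjoint) (auto simp: Iv_split(2))
  also have "\<dots> = (\<Sum>d<2. \<Sum>e<2. gsum (blk m n (Suc k) (2 * a + d) (2 * b + e)) Z)"
    unfolding sum2 blk_def gsum_prod by (simp add: sum.distrib)
  finally show ?thesis .
qed

definition Dk :: "nat \<Rightarrow> nat \<Rightarrow> (nat \<times> nat \<Rightarrow> real) \<Rightarrow> (nat \<times> nat \<Rightarrow> real) \<Rightarrow> nat \<Rightarrow> real" where
  "Dk m n \<theta> Z k = (\<Sum>a<2^k. \<Sum>b<2^k. \<Sum>d<2. \<Sum>e<2.
      gsum (blk m n (Suc k) (2 * a + d) (2 * b + e)) Z *
      (avg \<theta> (blk m n (Suc k) (2 * a + d) (2 * b + e)) - avg \<theta> (blk m n k a b)))"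

lemma SS_step: "SS m n \<theta> Z (Suc k) - SS m n \<theta> Z k = Dk m n \<theta> Z k"
proof -
  define f where "f = (\<lambda>a' b'. gsum (blk m n (Suc k) a' b') Z * avg \<theta> (blk m n (Suc k) a' b'))"
  have "SS m n \<theta> Z (Suc k) = (\<Sum>a'<2 * 2^k. \<Sum>b'<2 * 2^k. f a' b')"
    unfolding SS_def f_def by simp
  also have "\<dots> = (\<Sum>a<2^k. \<Sum>d<2. \<Sum>b<2^k. \<Sum>e<2. f (2 * a + d) (2 * b + e))"
    by (simp only: sum_double)
  also have "\<dots> = (\<Sum>a<2^k. \<Sum>b<2^k. \<Sum>d<2. \<Sum>e<2. f (2 * a + d) (2 * b + e))"
    by (rule sum.cong[OF refl], rule sum.swap)
  finally have A: "SS m n \<theta> Z (Suc k) = (\<Sum>a<2^k. \<Sum>b<2^k. \<Sum>d<2. \<Sum>e<2. f (2 * a + d) (2 * b + e))" .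
  have B: "SS m n \<theta> Z k = (\<Sum>a<2^k. \<Sum>b<2^k. \<Sum>d<2. \<Sum>e<2.
      gsum (blk m n (Suc k) (2 * a + d) (2 * b + e)) Z * avg \<theta> (blk m n k a b))"
    unfolding SS_def by (subst gsum_split) (simp add: sum_distrib_right)
  show ?thesis unfolding A B Dk_def f_def
    by (simp add: sum_subtractf right_diff_distrib)
qed

definition TVh :: "(nat \<times> nat \<Rightarrow> real) \<Rightarrow> nat set \<Rightarrow> nat set \<Rightarrow> real" where
  "TVh \<theta> R C = (\<Sum>i\<in>R. \<Sum>j\<in>{j\<in>C. Suc j \<in> C}. \<bar>\<theta> (i, Suc j) - \<theta> (i, j)\<bar>)"

definition TVv :: "(nat \<times> nat \<Rightarrow> real) \<Rightarrow> nat set \<Rightarrow> nat set \<Rightarrow> real" where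
  "TVv \<theta> R C = (\<Sum>i\<in>{i\<in>R. Suc i \<in> R}. \<Sum>j\<in>C. \<bar>\<theta> (Suc i, j) - \<theta> (i, j)\<bar>)"

lemma tele:
  fixes f :: "nat \<Rightarrow> real"
  assumes "j \<le> j'"
  shows "\<bar>f j' - f j\<bar> \<le> (\<Sum>l\<in>{j..<j'}. \<bar>f (Suc l) - f l\<bar>)"
  using assms
proof (induction j' rule: dec_induct)
  case base then show ?case by simp
next
  case (step l)
  have "\<bar>f (Suc l) - f j\<bar> \<le> \<bar>f (Suc l) - f l\<bar> + \<bar>f l - f j\<bar>" by linarith
  also have "\<dots> \<le> \<bar>f (Suc l) - f l\<bar> + (\<Sum>l\<in>{j..<l}. \<bar>f (Suc l) - f l\<bar>)" using step.IH by simp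
  also have "\<dots> = (\<Sum>l\<in>{j..<Suc l}. \<bar>f (Suc l) - f l\<bar>)" using step.hyps by simp
  finally show ?case .
qed

lemma interval_var:
  fixes f :: "nat \<Rightarrow> real"
  assumes "j \<in> {x..<y}" "j' \<in> {x..<y}"
  shows "\<bar>f j - f j'\<bar> \<le> (\<Sum>l\<in>{l\<in>{x..<y}. Suc l \<in> {x..<y}}. \<bar>f (Suc l) - f l\<bar>)"
proof -
  have gen: "\<bar>f v - f u\<bar> \<le> (\<Sum>l\<in>{l\<in>{x..<y}. Suc l \<in> {x..<y}}. \<bar>f (Suc l) - f l\<bar>)"
    if "u \<le> v" "u \<in> {x..<y}" "v \<in> {x..<y}" for u v
  proof -
    have "\<bar>f v - f u\<bar> \<le> (\<Sum>l\<in>{u..<v}. \<bar>f (Suc l) - f l\<bar>)" by (rule tele[OF that(1)])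
    also have "\<dots> \<le> (\<Sum>l\<in>{l\<in>{x..<y}. Suc l \<in> {x..<y}}. \<bar>f (Suc l) - f l\<bar>)"
      by (rule sum_mono2) (use that in auto)
    finally show ?thesis .
  qed
  show ?thesis
  proof (cases "j \<le> j'")
    case True then show ?thesis using gen[of j j'] assms abs_minus_commute[of "f j" "f j'"] by simp
  next
    case False then show ?thesis using gen[of j' j] assms by simp
  qed
qed

lemma poincare:
  fixes \<theta> :: "nat \<times> nat \<Rightarrow> real"
  assumes R: "R = {x1..<y1}" and C: "C = {x2..<y2}" and sub: "R' \<subseteq> R" "C' \<subseteq> C"
    and ne: "R' \<noteq> {}" "C' \<noteq> {}"
  shows "\<bar>avg \<theta> (R' \<times> C') - avg \<theta> (R \<times> C)\<bar> \<le> TVh \<theta> R C / real (card R') + TVv \<theta> R C / real (card C)"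
proof -
  define H where "H i = (\<Sum>j\<in>{j\<in>C. Suc j \<in> C}. \<bar>\<theta> (i, Suc j) - \<theta> (i, j)\<bar>)" for i
  define V where "V j = (\<Sum>i\<in>{i\<in>R. Suc i \<in> R}. \<bar>\<theta> (Suc i, j) - \<theta> (i, j)\<bar>)" for j
  have fR: "finite R" "finite C" using R C by auto
  have fR': "finite R'" "finite C'" using sub fR finite_subset by auto
  have neQ: "R \<noteq> {}" "C \<noteq> {}" using sub ne by auto
  define B where "B = R' \<times> C'"
  define Q where "Q = R \<times> C"
  have cB: "real (card B) = real (card R') * real (card C')" unfolding B_def by (simp add: card_cartesian_product)
  have cQ: "real (card Q) = real (card R) * real (card C)" unfolding Q_def by (simp add: card_cartesian_product)
  have pos: "real (card R') > 0" "real (card C') > 0" "real (card R) > 0" "real (card C) > 0"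
    using fR fR' ne neQ by (auto simp: card_gt_0_iff)
  have fB: "finite B" "finite Q" unfolding B_def Q_def using fR fR' by auto
  have pw: "\<bar>\<theta> b - \<theta> q\<bar> \<le> H (fst b) + V (snd q)" if "b \<in> B" "q \<in> Q" for b q
  proof -
    obtain i j where b: "b = (i, j)" by force
    obtain i' j' where q: "q = (i', j')" by force
    have ij: "i \<in> R" "j \<in> C" "i' \<in> R" "j' \<in> C" using that sub unfolding B_def Q_def b q by auto
    have h: "\<bar>\<theta> (i, j) - \<theta> (i, j')\<bar> \<le> H i"
      unfolding H_def using interval_var[of j x2 y2 j' "\<lambda>l. \<theta> (i, l)"] ij C by simp
    have v: "\<bar>\<theta> (i, j') - \<theta> (i', j')\<bar> \<le> V j'"
      unfolding V_def using interval_var[of i x1 y1 i' "\<lambda>l. \<theta> (l, j')"] ij R by simp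
    show ?thesis unfolding b q using h v by simp
  qed
  define P where "P = (\<Sum>b\<in>B. \<Sum>q\<in>Q. \<theta> b - \<theta> q)"
  have Peq: "P = real (card Q) * (\<Sum>b\<in>B. \<theta> b) - real (card B) * (\<Sum>q\<in>Q. \<theta> q)"
    unfolding P_def by (simp add: sum_subtractf flip: sum_distrib_left)
  have "\<bar>P\<bar> \<le> (\<Sum>b\<in>B. \<Sum>q\<in>Q. \<bar>\<theta> b - \<theta> q\<bar>)"
    unfolding P_def by (rule order_trans[OF sum_abs], rule sum_mono, rule sum_abs)
  also have "\<dots> \<le> (\<Sum>b\<in>B. \<Sum>q\<in>Q. H (fst b) + V (snd q))"
    by (intro sum_mono pw)
  also have "\<dots> = (\<Sum>b\<in>B. real (card Q) * H (fst b) + (\<Sum>q\<in>Q. V (snd q)))"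
    by (simp add: sum.distrib)
  also have "\<dots> = real (card Q) * (\<Sum>b\<in>B. H (fst b)) + real (card B) * (\<Sum>q\<in>Q. V (snd q))"
    by (simp add: sum.distrib sum_distrib_left)
  also have "(\<Sum>b\<in>B. H (fst b)) = real (card C') * (\<Sum>i\<in>R'. H i)"
  proof -
    have "(\<Sum>b\<in>R' \<times> C'. H (fst b)) = (\<Sum>(i,j)\<in>R' \<times> C'. H i)"
      by (rule sum.cong) auto
    also have "\<dots> = (\<Sum>i\<in>R'. \<Sum>j\<in>C'. H i)" by (rule sum.cartesian_product[symmetric])
    finally have "(\<Sum>b\<in>R' \<times> C'. H (fst b)) = (\<Sum>i\<in>R'. \<Sum>j\<in>C'. H i)" .
    then show ?thesis unfolding B_def by (simp add: sum_distrib_right mult_ac)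
  qed
  also have "(\<Sum>q\<in>Q. V (snd q)) = real (card R) * (\<Sum>j\<in>C. V j)"
  proof -
    have "(\<Sum>q\<in>R \<times> C. V (snd q)) = (\<Sum>(i,j)\<in>R \<times> C. V j)"
      by (rule sum.cong) auto
    also have "\<dots> = (\<Sum>i\<in>R. \<Sum>j\<in>C. V j)" by (rule sum.cartesian_product[symmetric])
    also have "\<dots> = (\<Sum>j\<in>C. \<Sum>i\<in>R. V j)" by (rule sum.swap)
    finally show ?thesis unfolding Q_def by (simp add: sum_distrib_right mult_ac)
  qed
  finally have Pb: "\<bar>P\<bar> \<le> real (card Q) * (real (card C') * (\<Sum>i\<in>R'. H i)) + real (card B) * (real (card R) * (\<Sum>j\<in>C. V j))" .
  have H1: "(\<Sum>i\<in>R'. H i) \<le> TVh \<theta> R C"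
    unfolding TVh_def H_def[symmetric] by (rule sum_mono2[OF fR(1) sub(1)]) (auto simp: H_def intro: sum_nonneg)
  have V1: "(\<Sum>j\<in>C. V j) = TVv \<theta> R C"
    unfolding TVv_def V_def by (rule sum.swap)
  have "avg \<theta> B - avg \<theta> Q = P / (real (card B) * real (card Q))"
    unfolding avg_def Peq using pos cB cQ by (simp add: field_simps)
  then have "\<bar>avg \<theta> B - avg \<theta> Q\<bar> = \<bar>P\<bar> / (real (card B) * real (card Q))"
    using pos by (simp add: abs_divide abs_mult)
  also have "\<dots> \<le> (real (card Q) * (real (card C') * TVh \<theta> R C) + real (card B) * (real (card R) * TVv \<theta> R C))
       / (real (card B) * real (card Q))"
  proof (rule divide_right_mono)
    have "real (card Q) * (real (card C') * (\<Sum>i\<in>R'. H i)) \<le> real (card Q) * (real (card C') * TVh \<theta> R C)"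
      using H1 pos by (intro mult_left_mono) auto
    then show "\<bar>P\<bar> \<le> real (card Q) * (real (card C') * TVh \<theta> R C) + real (card B) * (real (card R) * TVv \<theta> R C)"
      using Pb unfolding V1 by linarith
  qed (use pos cB cQ in simp)
  also have "\<dots> = TVh \<theta> R C / real (card R') + TVv \<theta> R C / real (card C)"
    using pos cB cQ by (simp add: field_simps)
  finally show ?thesis unfolding B_def Q_def .
qed

definition TVQ :: "(nat \<times> nat \<Rightarrow> real) \<Rightarrow> nat set \<Rightarrow> nat set \<Rightarrow> real" where
  "TVQ \<theta> R C = TVh \<theta> R C + TVv \<theta> R C"

lemma TVh_nonneg: "TVh \<theta> R C \<ge> 0" unfolding TVh_def by (intro sum_nonneg) auto
lemma TVv_nonneg: "TVv \<theta> R C \<ge> 0" unfolding TVv_def by (intro sum_nonneg) auto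
lemma TVQ_nonneg: "TVQ \<theta> R C \<ge> 0" unfolding TVQ_def using TVh_nonneg TVv_nonneg by (simp add: add_nonneg_nonneg)

lemma blockbound:
  fixes \<theta> Z :: "nat \<times> nat \<Rightarrow> real" and L :: real
  assumes R: "R = {xa..<ya}" and C: "C = {xb..<yb}" and sub: "R' \<subseteq> R" "C' \<subseteq> C"
    and L: "L \<ge> 1"
    and asp: "R' \<noteq> {} \<Longrightarrow> C' \<noteq> {} \<Longrightarrow> real (card C') \<le> L * real (card R') \<and> real (card R') \<le> L * real (card C')"
  shows "\<bar>gsum (R' \<times> C') Z * (avg \<theta> (R' \<times> C') - avg \<theta> (R \<times> C))\<bar> \<le> \<bar>gnorm (R' \<times> C') Z\<bar> * L * TVQ \<theta> R C"
proof (cases "R' = {} \<or> C' = {}")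
  case True
  then have "gsum (R' \<times> C') Z = 0" by (auto simp: gsum_def)
  moreover have "\<bar>gnorm (R' \<times> C') Z\<bar> * L * TVQ \<theta> R C \<ge> 0" using L TVQ_nonneg by simp
  ultimately show ?thesis by simp
next
  case False
  then have ne: "R' \<noteq> {}" "C' \<noteq> {}" by auto
  have fin: "finite R'" "finite C'" "finite C" using sub R C finite_subset by auto
  define h where "h = real (card R')"
  define w where "w = real (card C')"
  define wQ where "wQ = real (card C)"
  have hp: "h > 0" "w > 0" using ne fin by (auto simp: h_def w_def card_gt_0_iff)
  have wle: "w \<le> wQ" unfolding w_def wQ_def using sub(2) fin by (simp add: card_mono)
  have a1: "w \<le> L * h" and a2: "h \<le> L * w" using asp[OF ne] by (auto simp: h_def w_def)
  have cB: "real (card (R' \<times> C')) = h * w" by (simp add: h_def w_def card_cartesian_product)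
  have gs: "gsum (R' \<times> C') Z = gnorm (R' \<times> C') Z * sqrt (h * w)"
    unfolding gnorm_def cB using hp by simp
  have LL: "L \<le> L * L" using L mult_right_mono[of 1 L L] by simp
  have s1: "sqrt (h * w) \<le> L * h"
  proof -
    have "h * w \<le> h * (L * h)" using a1 hp by (intro mult_left_mono) auto
    also have "\<dots> = L * (h * h)" by simp
    also have "\<dots> \<le> (L * L) * (h * h)" using LL by (intro mult_right_mono) auto
    also have "\<dots> = (L * h)\<^sup>2" by (simp add: power2_eq_square)
    finally show ?thesis by (rule real_le_lsqrt[rotated]) (use hp L in auto)
  qed
  have s2: "sqrt (h * w) \<le> L * w"
  proof -
    have "h * w \<le> (L * w) * w" using a2 hp by (intro mult_right_mono) auto
    also have "\<dots> = L * (w * w)" by simp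
    also have "\<dots> \<le> (L * L) * (w * w)" using LL by (intro mult_right_mono) auto
    also have "\<dots> = (L * w)\<^sup>2" by (simp add: power2_eq_square)
    finally show ?thesis by (rule real_le_lsqrt[rotated]) (use hp L in auto)
  qed
  have P: "\<bar>avg \<theta> (R' \<times> C') - avg \<theta> (R \<times> C)\<bar> \<le> TVh \<theta> R C / h + TVv \<theta> R C / wQ"
    unfolding h_def wQ_def by (rule poincare[OF R C sub ne])
  have "\<bar>gsum (R' \<times> C') Z * (avg \<theta> (R' \<times> C') - avg \<theta> (R \<times> C))\<bar>
      = \<bar>gnorm (R' \<times> C') Z\<bar> * (sqrt (h * w) * \<bar>avg \<theta> (R' \<times> C') - avg \<theta> (R \<times> C)\<bar>)"
    unfolding gs using hp by (simp add: abs_mult less_imp_le)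
  also have "\<dots> \<le> \<bar>gnorm (R' \<times> C') Z\<bar> * (sqrt (h * w) * (TVh \<theta> R C / h + TVv \<theta> R C / wQ))"
    using hp by (intro mult_left_mono P) (auto intro: mult_nonneg_nonneg)
  also have "sqrt (h * w) * (TVh \<theta> R C / h + TVv \<theta> R C / wQ) \<le> L * TVQ \<theta> R C"
  proof -
    have e1: "sqrt (h * w) * (TVh \<theta> R C / h) \<le> L * TVh \<theta> R C"
    proof -
      have "sqrt (h * w) * (TVh \<theta> R C / h) = (sqrt (h * w) / h) * TVh \<theta> R C" by simp
      also have "\<dots> \<le> L * TVh \<theta> R C"
      proof (rule mult_right_mono)
        show "sqrt (h * w) / h \<le> L" using s1 hp by (simp add: divide_le_eq)
      qed (rule TVh_nonneg)
      finally show ?thesis .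
    qed
    have e2: "sqrt (h * w) * (TVv \<theta> R C / wQ) \<le> L * TVv \<theta> R C"
    proof -
      have wQp: "wQ > 0" using wle hp by simp
      have "L * w \<le> L * wQ" using wle L by (intro mult_left_mono) auto
      then have "sqrt (h * w) \<le> L * wQ" using s2 by linarith
      then have q: "sqrt (h * w) / wQ \<le> L" using wQp by (simp add: divide_le_eq)
      have "sqrt (h * w) * (TVv \<theta> R C / wQ) = (sqrt (h * w) / wQ) * TVv \<theta> R C" by simp
      also have "\<dots> \<le> L * TVv \<theta> R C" by (rule mult_right_mono[OF q TVv_nonneg])
      finally show ?thesis .
    qed
    show ?thesis using e1 e2 unfolding TVQ_def by (simp add: distrib_left)
  qed
  then have "\<bar>gnorm (R' \<times> C') Z\<bar> * (sqrt (h * w) * (TVh \<theta> R C / h + TVv \<theta> R C / wQ)) \<le> \<bar>gnorm (R' \<times> C') Z\<bar> * (L * TVQ \<theta> R C)"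
    by (intro mult_left_mono) auto
  finally show ?thesis by (simp add: mult.assoc)
qed

lemma aspect:
  fixes c :: real
  assumes c: "c \<ge> 0" and mn: "real n \<le> c * real m"
    and ne: "Iv m j a \<noteq> {}"
  shows "real (card (Iv n j b)) \<le> (2 * c + 1) * real (card (Iv m j a))"
proof -
  define x where "x = real m / 2 ^ j"
  define h where "h = real (card (Iv m j a))"
  define w where "w = real (card (Iv n j b))"
  have h1: "h \<ge> 1" using ne unfolding h_def by (simp add: Suc_leI card_gt_0_iff)
  have hx: "h > x - 1" unfolding h_def x_def by (rule card_Iv_bounds(1))
  have wy: "w < real n / 2 ^ j + 1" unfolding w_def by (rule card_Iv_bounds(2))
  have "real n / 2 ^ j \<le> c * x" unfolding x_def using mn by (simp add: divide_right_mono)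
  then have wx: "w < c * x + 1" using wy by linarith
  show ?thesis
  proof (cases "x \<ge> 2")
    case True
    then have "x \<le> 2 * h" using hx by linarith
    then have "c * x \<le> c * (2 * h)" using c by (simp add: mult_left_mono)
    then show ?thesis using wx h1 unfolding w_def[symmetric] h_def[symmetric] by (simp add: algebra_simps)
  next
    case False
    then have "c * x \<le> c * 2" using c by (intro mult_left_mono) auto
    moreover have "(2 * c + 1) * 1 \<le> (2 * c + 1) * h" using h1 c by (intro mult_left_mono) auto
    then have "2 * c + 1 \<le> (2 * c + 1) * h" by simp
    ultimately show ?thesis using wx unfolding w_def[symmetric] h_def[symmetric] by linarith
  qed
qed

lemma edges_part:
  fixes g :: "nat \<Rightarrow> real"
  assumes g: "\<And>j. g j \<ge> 0"
  shows "(\<Sum>b<2^k. \<Sum>j\<in>{j\<in>Iv n k b. Suc j \<in> Iv n k b}. g j) \<le> (\<Sum>j\<in>{j. j + 1 < n}. g j)"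
proof -
  have "(\<Sum>j\<in>{j\<in>Iv n k b. Suc j \<in> Iv n k b}. g j) \<le> (\<Sum>j\<in>Iv n k b. if Suc j < n then g j else 0)"
    if b: "b < 2^k" for b
  proof -
    have sub: "Iv n k b \<subseteq> {..<n}" using Iv_sub[OF b] .
    have "(\<Sum>j\<in>{j\<in>Iv n k b. Suc j \<in> Iv n k b}. g j) = (\<Sum>j\<in>{j\<in>Iv n k b. Suc j \<in> Iv n k b}. if Suc j < n then g j else 0)"
      using sub by (intro sum.cong) auto
    also have "\<dots> \<le> (\<Sum>j\<in>Iv n k b. if Suc j < n then g j else 0)"
      by (rule sum_mono2) (auto simp: g)
    finally show ?thesis .
  qed
  then have "(\<Sum>b<2^k. \<Sum>j\<in>{j\<in>Iv n k b. Suc j \<in> Iv n k b}. g j) \<le> (\<Sum>b<2^k. \<Sum>j\<in>Iv n k b. if Suc j < n then g j else 0)"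
    by (intro sum_mono) auto
  also have "\<dots> = (\<Sum>j<n. if Suc j < n then g j else 0)" by (rule partition_sum)
  also have "\<dots> = (\<Sum>j\<in>{j\<in>{..<n}. Suc j < n}. g j)" by (rule sum.inter_filter[symmetric]) simp
  also have "{j\<in>{..<n}. Suc j < n} = {j. j + 1 < n}" by auto
  finally show ?thesis .
qed

lemma TV_part:
  "(\<Sum>a<2^k. \<Sum>b<2^k. TVQ \<theta> (Iv m k a) (Iv n k b)) \<le> TV m n \<theta>"
proof -
  define g where "g i j = \<bar>\<theta> (i, Suc j) - \<theta> (i, j)\<bar>" for i j
  define g' where "g' i j = \<bar>\<theta> (Suc i, j) - \<theta> (i, j)\<bar>" for i j
  have h: "(\<Sum>a<2^k. \<Sum>b<2^k. TVh \<theta> (Iv m k a) (Iv n k b)) \<le> (\<Sum>i<m. \<Sum>j\<in>{j. j + 1 < n}. g i j)"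
  proof -
    have "(\<Sum>a<2^k. \<Sum>b<2^k. TVh \<theta> (Iv m k a) (Iv n k b))
        = (\<Sum>a<2^k. \<Sum>i\<in>Iv m k a. \<Sum>b<2^k. \<Sum>j\<in>{j\<in>Iv n k b. Suc j \<in> Iv n k b}. g i j)"
      unfolding TVh_def g_def by (rule sum.cong[OF refl], rule sum.swap)
    also have "\<dots> \<le> (\<Sum>a<2^k. \<Sum>i\<in>Iv m k a. \<Sum>j\<in>{j. j + 1 < n}. g i j)"
      by (intro sum_mono edges_part) (auto simp: g_def)
    also have "\<dots> = (\<Sum>i<m. \<Sum>j\<in>{j. j + 1 < n}. g i j)" by (rule partition_sum)
    finally show ?thesis .
  qed
  have v: "(\<Sum>a<2^k. \<Sum>b<2^k. TVv \<theta> (Iv m k a) (Iv n k b)) \<le> (\<Sum>i\<in>{i. i + 1 < m}. \<Sum>j<n. g' i j)"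
  proof -
    have "(\<Sum>a<2^k. \<Sum>b<2^k. TVv \<theta> (Iv m k a) (Iv n k b))
        = (\<Sum>a<2^k. \<Sum>i\<in>{i\<in>Iv m k a. Suc i \<in> Iv m k a}. \<Sum>b<2^k. \<Sum>j\<in>Iv n k b. g' i j)"
      unfolding TVv_def g'_def by (rule sum.cong[OF refl], rule sum.swap)
    also have "\<dots> = (\<Sum>a<2^k. \<Sum>i\<in>{i\<in>Iv m k a. Suc i \<in> Iv m k a}. \<Sum>j<n. g' i j)"
      by (simp add: partition_sum)
    also have "\<dots> \<le> (\<Sum>i\<in>{i. i + 1 < m}. \<Sum>j<n. g' i j)"
      by (rule edges_part) (auto simp: g'_def intro: sum_nonneg)
    finally show ?thesis .
  qed
  have "(\<Sum>a<2^k. \<Sum>b<2^k. TVQ \<theta> (Iv m k a) (Iv n k b))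
      = (\<Sum>a<2^k. \<Sum>b<2^k. TVh \<theta> (Iv m k a) (Iv n k b)) + (\<Sum>a<2^k. \<Sum>b<2^k. TVv \<theta> (Iv m k a) (Iv n k b))"
    unfolding TVQ_def by (simp add: sum.distrib)
  also have "\<dots> \<le> (\<Sum>i<m. \<Sum>j\<in>{j. j + 1 < n}. g i j) + (\<Sum>i\<in>{i. i + 1 < m}. \<Sum>j<n. g' i j)"
    using h v by linarith
  also have "\<dots> = TV m n \<theta>" unfolding TV_def g_def g'_def by simp
  finally show ?thesis .
qed

definition Fk :: "nat \<Rightarrow> nat \<Rightarrow> (nat \<times> nat \<Rightarrow> real) \<Rightarrow> nat \<Rightarrow> real \<Rightarrow> real" where
  "Fk m n Z k s = s + (\<Sum>a<2^k. \<Sum>b<2^k. \<Sum>d<2. \<Sum>e<2.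
      max (\<bar>gnorm (blk m n (Suc k) (2 * a + d) (2 * b + e)) Z\<bar> - s) 0)"

lemma nest4:
  fixes f :: "nat \<Rightarrow> nat \<Rightarrow> nat \<Rightarrow> nat \<Rightarrow> real"
  assumes nn: "\<And>a b d e. 0 \<le> f a b d e"
    and "a < A" "b < B" "d < D" "e < E"
  shows "f a b d e \<le> (\<Sum>a<A. \<Sum>b<B. \<Sum>d<D. \<Sum>e<E. f a b d e)"
proof -
  have "f a b d e \<le> (\<Sum>e<E. f a b d e)"
    by (rule member_le_sum) (use assms in auto)
  also have "\<dots> \<le> (\<Sum>d<D. \<Sum>e<E. f a b d e)"
    by (rule member_le_sum[where f = "\<lambda>d. \<Sum>e<E. f a b d e"]) (use assms in \<open>auto intro!: sum_nonneg\<close>)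
  also have "\<dots> \<le> (\<Sum>b<B. \<Sum>d<D. \<Sum>e<E. f a b d e)"
    by (rule member_le_sum[where f = "\<lambda>b. \<Sum>d<D. \<Sum>e<E. f a b d e"]) (use assms in \<open>auto intro!: sum_nonneg\<close>)
  also have "\<dots> \<le> (\<Sum>a<A. \<Sum>b<B. \<Sum>d<D. \<Sum>e<E. f a b d e)"
    by (rule member_le_sum[where f = "\<lambda>a. \<Sum>b<B. \<Sum>d<D. \<Sum>e<E. f a b d e"]) (use assms in \<open>auto intro!: sum_nonneg\<close>)
  finally show ?thesis .
qed

lemma gnorm_le_Fk:
  assumes "a < 2^k" "b < 2^k" "d < 2" "e < 2"
  shows "\<bar>gnorm (blk m n (Suc k) (2 * a + d) (2 * b + e)) Z\<bar> \<le> Fk m n Z k s"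
proof -
  have "max (\<bar>gnorm (blk m n (Suc k) (2 * a + d) (2 * b + e)) Z\<bar> - s) 0 \<le> (\<Sum>a<2^k. \<Sum>b<2^k. \<Sum>d<2. \<Sum>e<2.
      max (\<bar>gnorm (blk m n (Suc k) (2 * a + d) (2 * b + e)) Z\<bar> - s) 0)"
    by (rule nest4[where f = "\<lambda>a b d e. max (\<bar>gnorm (blk m n (Suc k) (2 * a + d) (2 * b + e)) Z\<bar> - s) 0"])
       (use assms in auto)
  then show ?thesis unfolding Fk_def by linarith
qed

lemma child_bound:
  fixes c :: real
  assumes c: "c \<ge> 1" and mn: "real m \<le> c * real n" "real n \<le> c * real m"
    and d: "d < 2" and e: "e < 2"
  shows "\<bar>gsum (blk m n (Suc k) (2 * a + d) (2 * b + e)) Z *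
      (avg \<theta> (blk m n (Suc k) (2 * a + d) (2 * b + e)) - avg \<theta> (blk m n k a b))\<bar>
    \<le> \<bar>gnorm (blk m n (Suc k) (2 * a + d) (2 * b + e)) Z\<bar> * (2 * c + 1) * TVQ \<theta> (Iv m k a) (Iv n k b)"
  unfolding blk_def
proof (rule blockbound[where xa = "lo m k a" and ya = "lo m k (Suc a)" and xb = "lo n k b" and yb = "lo n k (Suc b)"])
  show "Iv m k a = {lo m k a..<lo m k (Suc a)}" "Iv n k b = {lo n k b..<lo n k (Suc b)}"
    by (simp_all add: Iv_def)
  show "Iv m (Suc k) (2 * a + d) \<subseteq> Iv m k a" "Iv n (Suc k) (2 * b + e) \<subseteq> Iv n k b"
    using d e by (simp_all add: Iv_sub_child)
  show "1 \<le> 2 * c + 1" using c by simp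
  assume ne: "Iv m (Suc k) (2 * a + d) \<noteq> {}" "Iv n (Suc k) (2 * b + e) \<noteq> {}"
  show "real (card (Iv n (Suc k) (2 * b + e))) \<le> (2 * c + 1) * real (card (Iv m (Suc k) (2 * a + d))) \<and>
        real (card (Iv m (Suc k) (2 * a + d))) \<le> (2 * c + 1) * real (card (Iv n (Suc k) (2 * b + e)))"
    using aspect[OF _ mn(2) ne(1)] aspect[OF _ mn(1) ne(2)] c by simp
qed

lemma Dk_bound:
  fixes c :: real
  assumes c: "c \<ge> 1" and mn: "real m \<le> c * real n" "real n \<le> c * real m"
    and s: "s \<ge> 0" and tv: "TV m n \<theta> \<le> \<delta>"
  shows "Dk m n \<theta> Z k \<le> 4 * (2 * c + 1) * \<delta> * Fk m n Z k s"
proof -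
  define L where "L = 2 * c + 1"
  define T where "T a b = TVQ \<theta> (Iv m k a) (Iv n k b)" for a b
  have Fnn: "Fk m n Z k s \<ge> 0" unfolding Fk_def using s by (auto intro!: sum_nonneg add_nonneg_nonneg)
  have Lp: "L \<ge> 0" using c by (simp add: L_def)
  have "Dk m n \<theta> Z k \<le> (\<Sum>a<2^k. \<Sum>b<2^k. \<Sum>d<2. \<Sum>e<2.
      \<bar>gsum (blk m n (Suc k) (2 * a + d) (2 * b + e)) Z *
      (avg \<theta> (blk m n (Suc k) (2 * a + d) (2 * b + e)) - avg \<theta> (blk m n k a b))\<bar>)"
    unfolding Dk_def by (intro sum_mono) auto
  also have "\<dots> \<le> (\<Sum>a<2^k. \<Sum>b<2^k. \<Sum>d<(2::nat). \<Sum>e<(2::nat). Fk m n Z k s * L * T a b)"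
  proof -
    have hh: "\<bar>gsum (blk m n (Suc k) (2 * a + d) (2 * b + e)) Z *
      (avg \<theta> (blk m n (Suc k) (2 * a + d) (2 * b + e)) - avg \<theta> (blk m n k a b))\<bar> \<le> Fk m n Z k s * L * T a b"
      if i: "a < 2^k" "b < 2^k" "d < 2" "e < 2" for a b d e
    proof -
      have "\<bar>gnorm (blk m n (Suc k) (2 * a + d) (2 * b + e)) Z\<bar> * L * T a b \<le> Fk m n Z k s * L * T a b"
        using gnorm_le_Fk[OF i, of m n Z s] Lp TVQ_nonneg unfolding T_def
        by (intro mult_right_mono) auto
      then show ?thesis
        using child_bound[OF c mn i(3,4), of k a b Z \<theta>] unfolding L_def T_def by linarith
    qed
    show ?thesis by (intro sum_mono hh) auto
  qed
  also have "\<dots> = 4 * (Fk m n Z k s * L) * (\<Sum>a<2^k. \<Sum>b<2^k. T a b)"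
    by (simp add: sum_distrib_left mult.assoc)
  also have "\<dots> \<le> 4 * (Fk m n Z k s * L) * \<delta>"
  proof (rule mult_left_mono)
    show "(\<Sum>a<2^k. \<Sum>b<2^k. T a b) \<le> \<delta>" using TV_part[where k=k and \<theta>=\<theta> and m=m and n=n] tv unfolding T_def by linarith
  qed (use Fnn Lp in simp)
  finally show ?thesis unfolding L_def by (simp add: algebra_simps)
qed

lemma mean_bound:
  assumes "m \<ge> 1" "n \<ge> 1" and fr: "frob m n \<theta> \<le> t"
  shows "gsum (idx m n) Z * avg \<theta> (idx m n) \<le> t * \<bar>gnorm (idx m n) Z\<bar>"
proof -
  define N where "N = real (card (idx m n))"
  have Np: "N > 0" using assms unfolding N_def idx_def by (simp add: card_cartesian_product)
  have cs: "\<bar>\<Sum>p\<in>idx m n. \<theta> p\<bar> \<le> sqrt N * frob m n \<theta>"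
  proof -
    have "\<bar>\<Sum>p\<in>idx m n. \<theta> p\<bar> \<le> (\<Sum>p\<in>idx m n. \<bar>(\<lambda>_. 1::real) p\<bar> * \<bar>\<theta> p\<bar>)"
      by (simp add: sum_abs)
    also have "\<dots> \<le> L2_set (\<lambda>_. 1::real) (idx m n) * L2_set \<theta> (idx m n)" by (rule L2_set_mult_ineq)
    also have "\<dots> = sqrt N * frob m n \<theta>" by (simp add: L2_set_def frob_def N_def)
    finally show ?thesis .
  qed
  have "gsum (idx m n) Z * avg \<theta> (idx m n) = gnorm (idx m n) Z * ((\<Sum>p\<in>idx m n. \<theta> p) / sqrt N)"
    unfolding gnorm_def avg_def N_def[symmetric] using Np
    by (simp add: field_simps)
  also have "\<dots> \<le> \<bar>gnorm (idx m n) Z\<bar> * \<bar>(\<Sum>p\<in>idx m n. \<theta> p) / sqrt N\<bar>"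
    by (metis abs_ge_self abs_mult)
  also have "\<bar>(\<Sum>p\<in>idx m n. \<theta> p) / sqrt N\<bar> \<le> t"
    using cs fr Np by (simp add: abs_divide divide_le_eq mult.commute order_trans)
  then have "\<bar>gnorm (idx m n) Z\<bar> * \<bar>(\<Sum>p\<in>idx m n. \<theta> p) / sqrt N\<bar> \<le> \<bar>gnorm (idx m n) Z\<bar> * t"
    by (intro mult_left_mono) auto
  finally show ?thesis by (simp add: mult.commute)
qed

lemma pointwise:
  fixes c :: real
  assumes c: "c \<ge> 1" and mn: "real m \<le> c * real n" "real n \<le> c * real m"
    and m1: "m \<ge> 1" and n1: "n \<ge> 1" and K: "m \<le> 2 ^ K" "n \<le> 2 ^ K"
    and th: "\<theta> \<in> M_nbr m n \<delta> t" and s: "\<And>k. s k \<ge> 0"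
  shows "minner m n Z \<theta> \<le> t * \<bar>gnorm (idx m n) Z\<bar> + 4 * (2 * c + 1) * \<delta> * (\<Sum>k<K. Fk m n Z k (s k))"
proof -
  have tv: "TV m n \<theta> \<le> \<delta>" and fr: "frob m n \<theta> \<le> t" using th by (auto simp: M_nbr_def)
  have "minner m n Z \<theta> = SS m n \<theta> Z K" using SS_top[OF K] by simp
  also have "\<dots> = SS m n \<theta> Z 0 + (\<Sum>k<K. Dk m n \<theta> Z k)"
    using sum_lessThan_telescope[of "SS m n \<theta> Z" K] by (simp add: SS_step)
  also have "\<dots> \<le> t * \<bar>gnorm (idx m n) Z\<bar> + (\<Sum>k<K. 4 * (2 * c + 1) * \<delta> * Fk m n Z k (s k))"
    using SS_0 mean_bound[OF m1 n1 fr] Dk_bound[OF c mn s tv] by (intro add_mono sum_mono) auto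
  finally show ?thesis by (simp add: sum_distrib_left)
qed

lemma int_sum_bound:
  fixes f :: "'i \<Rightarrow> 'a \<Rightarrow> real"
  assumes "finite I" and "\<And>i. i \<in> I \<Longrightarrow> integrable M (f i)"
    and "\<And>i. i \<in> I \<Longrightarrow> integral\<^sup>L M (f i) \<le> B"
  shows "integrable M (\<lambda>x. \<Sum>i\<in>I. f i x) \<and> integral\<^sup>L M (\<lambda>x. \<Sum>i\<in>I. f i x) \<le> real (card I) * B"
proof
  show "integrable M (\<lambda>x. \<Sum>i\<in>I. f i x)" using assms by auto
  have "integral\<^sup>L M (\<lambda>x. \<Sum>i\<in>I. f i x) = (\<Sum>i\<in>I. integral\<^sup>L M (f i))"
    by (rule Bochner_Integration.integral_sum) (use assms in auto)
  also have "\<dots> \<le> (\<Sum>i\<in>I. B)" by (rule sum_mono) (use assms in auto)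
  finally show "integral\<^sup>L M (\<lambda>x. \<Sum>i\<in>I. f i x) \<le> real (card I) * B" by simp
qed

lemma blk_sub_idx:
  assumes "a < 2^k" "b < 2^k" "d < 2" "e < 2"
  shows "blk m n (Suc k) (2 * a + d) (2 * b + e) \<subseteq> idx m n"
proof -
  have "2 * a + d < 2 ^ Suc k" "2 * b + e < 2 ^ Suc k" using assms by auto
  then show ?thesis unfolding blk_def idx_def using Iv_sub by blast
qed

lemma Fk_int:
  shows "integrable (gauss_mat m n) (\<lambda>Z. Fk m n Z k s) \<and>
         integral\<^sup>L (gauss_mat m n) (\<lambda>Z. Fk m n Z k s) \<le> s + real (4 ^ Suc k) * (4 * exp (- s))"
proof -
  interpret prob_space "gauss_mat m n" by (rule prob_space_gauss)
  define g where "g a b d e Z = max (\<bar>gnorm (blk m n (Suc k) (2 * a + d) (2 * b + e)) Z\<bar> - s) 0" for a b d e Z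
  have base: "integrable (gauss_mat m n) (g a b d e) \<and> integral\<^sup>L (gauss_mat m n) (g a b d e) \<le> 4 * exp (- s)"
    if "a < 2^k" "b < 2^k" "d < 2" "e < 2" for a b d e
    unfolding g_def using gnorm_pos[OF blk_sub_idx[OF that]] by auto
  have l1: "integrable (gauss_mat m n) (\<lambda>Z. \<Sum>e<2. g a b d e Z) \<and> integral\<^sup>L (gauss_mat m n) (\<lambda>Z. \<Sum>e<2. g a b d e Z) \<le> 2 * (4 * exp (- s))"
    if "a < 2^k" "b < 2^k" "d < 2" for a b d
    using int_sum_bound[of "{..<2::nat}" "gauss_mat m n" "g a b d" "4 * exp (- s)"] base[OF that] by auto
  have l2: "integrable (gauss_mat m n) (\<lambda>Z. \<Sum>d<2. \<Sum>e<2. g a b d e Z) \<and> integral\<^sup>L (gauss_mat m n) (\<lambda>Z. \<Sum>d<2. \<Sum>e<2. g a b d e Z) \<le> 2 * (2 * (4 * exp (- s)))"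
    if "a < 2^k" "b < 2^k" for a b
    using int_sum_bound[of "{..<2::nat}" "gauss_mat m n" "\<lambda>d Z. \<Sum>e<2. g a b d e Z" "2 * (4 * exp (- s))"] l1[OF that] by auto
  have l3: "integrable (gauss_mat m n) (\<lambda>Z. \<Sum>b<2^k. \<Sum>d<2. \<Sum>e<2. g a b d e Z) \<and> integral\<^sup>L (gauss_mat m n) (\<lambda>Z. \<Sum>b<2^k. \<Sum>d<2. \<Sum>e<2. g a b d e Z) \<le> 2^k * (2 * (2 * (4 * exp (- s))))"
    if "a < 2^k" for a
    using int_sum_bound[of "{..<2^k::nat}" "gauss_mat m n" "\<lambda>b Z. \<Sum>d<2. \<Sum>e<2. g a b d e Z" "2 * (2 * (4 * exp (- s)))"] l2[OF that] by auto
  have l4: "integrable (gauss_mat m n) (\<lambda>Z. \<Sum>a<2^k. \<Sum>b<2^k. \<Sum>d<2. \<Sum>e<2. g a b d e Z) \<and> integral\<^sup>L (gauss_mat m n) (\<lambda>Z. \<Sum>a<2^k. \<Sum>b<2^k. \<Sum>d<2. \<Sum>e<2. g a b d e Z) \<le> 2^k * (2^k * (2 * (2 * (4 * exp (- s)))))"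
    using int_sum_bound[of "{..<2^k::nat}" "gauss_mat m n" "\<lambda>a Z. \<Sum>b<2^k. \<Sum>d<2. \<Sum>e<2. g a b d e Z" "2^k * (2 * (2 * (4 * exp (- s))))"] l3 by auto
  have eqF: "(\<lambda>Z. Fk m n Z k s) = (\<lambda>Z. s + (\<Sum>a<2^k. \<Sum>b<2^k. \<Sum>d<2. \<Sum>e<2. g a b d e Z))"
    unfolding Fk_def g_def ..
  have c4: "(2::real)^k * (2^k * (2 * (2 * (4 * exp (- s))))) = real (4 ^ Suc k) * (4 * exp (- s))"
    by (simp add: power_mult_distrib[symmetric])
  have c5: "(2::real)^k * (2^k * (16 * exp (- s))) = 16 * (4 ^ k * exp (- s))"
    by (simp add: power_mult_distrib[symmetric])
  show ?thesis unfolding eqF using l4 c4 c5 prob_space by auto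
qed

lemma zero_in_M: "\<delta> > 0 \<Longrightarrow> t > 0 \<Longrightarrow> (\<lambda>_. 0) \<in> M_nbr m n \<delta> t"
  by (simp add: M_nbr_def is_matrix_def TV_def frob_def)

lemma exp_s: "4 * exp (- (real (Suc k) * ln 4)) * real (4 ^ Suc k) = (4::real)"
proof -
  have "exp (real (Suc k) * ln 4) = (4::real) ^ Suc k"
    by (subst exp_of_nat_mult) simp
  then have "exp (- (real (Suc k) * ln 4)) = 1 / (4::real) ^ Suc k"
    by (simp only: exp_minus inverse_eq_divide)
  then show ?thesis by simp
qed

lemma ln4_le: "ln (4::real) \<le> 2"
proof -
  have "ln (4::real) = 2 * ln 2" using ln_realpow[of 2 2] by simp
  then show ?thesis using ln_2_less_1 by simp
qed

lemma K_facts: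
  fixes x :: real
  assumes "x \<ge> 1"
  shows "x \<le> 2 ^ nat \<lceil>log 2 x\<rceil>" and "real (nat \<lceil>log 2 x\<rceil>) < log 2 x + 1"
proof -
  have lp: "log 2 x \<ge> 0" using assms by simp
  have rk: "real (nat \<lceil>log 2 x\<rceil>) = real_of_int \<lceil>log 2 x\<rceil>" using lp by simp
  have "x = 2 powr (log 2 x)" using assms by simp
  also have "\<dots> \<le> 2 powr (real (nat \<lceil>log 2 x\<rceil>))" unfolding rk by (intro powr_mono) auto
  also have "\<dots> = 2 ^ nat \<lceil>log 2 x\<rceil>" by (simp add: powr_realpow)
  finally show "x \<le> 2 ^ nat \<lceil>log 2 x\<rceil>" .
  show "real (nat \<lceil>log 2 x\<rceil>) < log 2 x + 1" unfolding rk by linarith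
qed

theorem lemma5p12:
  fixes c :: real
  assumes "c > 0"
  shows "\<exists>C::real. \<forall>(m::nat) (n::nat) (\<delta>::real) (t::real).
           \<delta> > 0 \<and> 0 < t \<and> t \<le> 1 \<and> m \<ge> 1 \<and> n \<ge> 2 \<and>
           max (real m / real n) (real n / real m) \<le> c \<longrightarrow>
           GW m n (M_nbr m n \<delta> t) \<le> C * (\<delta> * (ln (real n))\<^sup>2 + t)"
proof -
  define c1 where "c1 = max c 1"
  define L where "L = 2 * c1 + 1"
  define b where "b = log 2 c1 + 1"
  define A where "A = 2 + 2 * b"
  define C where "C = 4 + 4 * L * (A * (2 * A + 8))"
  have c1: "c1 \<ge> 1" by (simp add: c1_def)
  have b1: "b \<ge> 1" using c1 by (simp add: b_def)
  have A0: "A > 0" using b1 by (simp add: A_def)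
  have L0: "L > 0" using c1 by (simp add: L_def)
  have C0: "C \<ge> 0" using A0 L0 by (simp add: C_def)
  have main: "GW m n (M_nbr m n \<delta> t) \<le> C * (\<delta> * (ln (real n))\<^sup>2 + t)"
    if d0: "\<delta> > 0" and t0: "0 < t" and t1: "t \<le> 1" and m1: "m \<ge> 1" and n2: "n \<ge> 2"
      and rat: "max (real m / real n) (real n / real m) \<le> c" for m n \<delta> t
  proof -
    interpret prob_space "gauss_mat m n" by (rule prob_space_gauss)
    have n1: "n \<ge> 1" using n2 by simp
    have mp: "real m > 0" and np: "real n > 0" using m1 n2 by auto
    have mn1: "real m \<le> c1 * real n"
    proof -
      have "real m / real n \<le> c" using rat by simp
      then have "real m \<le> c * real n" using np by (simp add: divide_le_eq)
      also have "\<dots> \<le> c1 * real n" using np by (intro mult_right_mono) (auto simp: c1_def)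
      finally show ?thesis .
    qed
    have mn2: "real n \<le> c1 * real m"
    proof -
      have "real n / real m \<le> c" using rat by simp
      then have "real n \<le> c * real m" using mp by (simp add: divide_le_eq)
      also have "\<dots> \<le> c1 * real m" using mp by (intro mult_right_mono) (auto simp: c1_def)
      finally show ?thesis .
    qed
    define x where "x = real (max m n)"
    have x1: "x \<ge> 1" using m1 by (simp add: x_def)
    define K where "K = nat \<lceil>log 2 x\<rceil>"
    have K2: "x \<le> 2 ^ K" and Klt: "real K < log 2 x + 1" using K_facts[OF x1] unfolding K_def by auto
    have Km: "m \<le> 2 ^ K"
    proof -
      have "real m \<le> 2 ^ K" using K2 by (simp add: x_def)
      then show ?thesis by (metis of_nat_le_iff of_nat_numeral of_nat_power)
    qed
    have Kn: "n \<le> 2 ^ K"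
    proof -
      have "real n \<le> 2 ^ K" using K2 by (simp add: x_def)
      then show ?thesis by (metis of_nat_le_iff of_nat_numeral of_nat_power)
    qed
    have ln2: "ln (2::real) \<ge> 2/3" by (rule ln2_ge_two_thirds)
    have lnn: "ln (real n) \<ge> 2/3"
    proof -
      have "ln (2::real) \<le> ln (real n)" using n2 by simp
      then show ?thesis using ln2 by linarith
    qed
    have KA: "real K \<le> A * ln (real n)"
    proof -
      have "1 * real n \<le> c1 * real n" using c1 np by (intro mult_right_mono) auto
      then have "x \<le> c1 * real n" using mn1 by (simp add: x_def of_nat_max)
      then have "log 2 x \<le> log 2 (c1 * real n)" using x1 by (subst log_le_cancel_iff) auto
      also have "\<dots> = log 2 c1 + log 2 (real n)" using c1 np by (simp add: log_mult)
      also have "log 2 (real n) = ln (real n) / ln 2" by (simp add: log_def)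
      also have "ln (real n) / ln 2 \<le> 2 * ln (real n)"
        using ln2 lnn by (simp add: divide_le_eq)
      finally have "real K \<le> b + 2 * ln (real n)" using Klt unfolding b_def by linarith
      moreover have "b \<le> 2 * b * ln (real n)"
      proof -
        have "b * 1 \<le> b * (2 * ln (real n))" using b1 lnn by (intro mult_left_mono) auto
        then show ?thesis by simp
      qed
      ultimately show ?thesis unfolding A_def by (simp add: algebra_simps)
    qed
    define s where "s k = real (Suc k) * ln 4" for k
    have s0: "s k \<ge> 0" for k by (simp add: s_def)
    define Fb where "Fb Z = t * \<bar>gnorm (idx m n) Z\<bar> + 4 * L * \<delta> * (\<Sum>k<K. Fk m n Z k (s k))" for Z
    have pw: "minner m n Z v \<le> Fb Z" if "v \<in> M_nbr m n \<delta> t" for Z v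
      using pointwise[OF c1 mn1 mn2 m1 n1 Km Kn that s0] unfolding Fb_def L_def by simp
    have Fk_i: "integrable (gauss_mat m n) (\<lambda>Z. Fk m n Z k (s k))" for k
      using Fk_int by blast
    have Fk_b: "integral\<^sup>L (gauss_mat m n) (\<lambda>Z. Fk m n Z k (s k)) \<le> 2 * real K + 4" if "k < K" for k
    proof -
      have "integral\<^sup>L (gauss_mat m n) (\<lambda>Z. Fk m n Z k (s k)) \<le> s k + real (4 ^ Suc k) * (4 * exp (- s k))"
        using Fk_int by blast
      also have "\<dots> = s k + 4" using exp_s[of k] by (simp add: s_def mult_ac)
      also have "s k \<le> real (Suc k) * 2" unfolding s_def using ln4_le by (intro mult_left_mono) auto
      also have "real (Suc k) \<le> real K" using that by simp
      finally show ?thesis by linarith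
    qed
    have G: "idx m n \<subseteq> idx m n" by simp
    have Fb_i: "integrable (gauss_mat m n) Fb"
      unfolding Fb_def using gnorm_abs(1)[OF G] Fk_i by auto
    have "integral\<^sup>L (gauss_mat m n) Fb = t * integral\<^sup>L (gauss_mat m n) (\<lambda>Z. \<bar>gnorm (idx m n) Z\<bar>)
        + 4 * L * \<delta> * (\<Sum>k<K. integral\<^sup>L (gauss_mat m n) (\<lambda>Z. Fk m n Z k (s k)))"
      unfolding Fb_def using gnorm_abs(1)[OF G] Fk_i
      by (simp add: Bochner_Integration.integral_add Bochner_Integration.integral_sum)
    also have "\<dots> \<le> t * 4 + 4 * L * \<delta> * (real K * (2 * real K + 4))"
    proof (rule add_mono)
      show "t * integral\<^sup>L (gauss_mat m n) (\<lambda>Z. \<bar>gnorm (idx m n) Z\<bar>) \<le> t * 4"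
        using gnorm_abs(2)[OF G] t0 by (intro mult_left_mono) auto
      have "(\<Sum>k<K. integral\<^sup>L (gauss_mat m n) (\<lambda>Z. Fk m n Z k (s k))) \<le> (\<Sum>k<K. 2 * real K + 4)"
        by (rule sum_mono) (use Fk_b in auto)
      also have "\<dots> = real K * (2 * real K + 4)" by simp
      finally show "4 * L * \<delta> * (\<Sum>k<K. integral\<^sup>L (gauss_mat m n) (\<lambda>Z. Fk m n Z k (s k))) \<le> 4 * L * \<delta> * (real K * (2 * real K + 4))"
        using L0 d0 by (intro mult_left_mono) auto
    qed
    also have "real K * (2 * real K + 4) \<le> A * (2 * A + 8) * (ln (real n))\<^sup>2"
    proof -
      have "2 * real K + 4 \<le> 2 * (A * ln (real n)) + 8 * ln (real n)" using KA lnn by linarith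
      also have "\<dots> = (2 * A + 8) * ln (real n)" by (simp add: algebra_simps)
      finally have e: "2 * real K + 4 \<le> (2 * A + 8) * ln (real n)" .
      have "real K * (2 * real K + 4) \<le> (A * ln (real n)) * ((2 * A + 8) * ln (real n))"
        using KA e by (intro mult_mono) auto
      then show ?thesis by (simp add: power2_eq_square mult_ac)
    qed
    then have "t * 4 + 4 * L * \<delta> * (real K * (2 * real K + 4)) \<le> t * 4 + 4 * L * \<delta> * (A * (2 * A + 8) * (ln (real n))\<^sup>2)"
      using L0 d0 by (intro add_left_mono mult_left_mono) auto
    also have "\<dots> \<le> C * (\<delta> * (ln (real n))\<^sup>2 + t)"
    proof -
      have X: "0 \<le> 4 * L * (A * (2 * A + 8))" using A0 L0 by simp
      have "0 \<le> (4 * L * (A * (2 * A + 8))) * t" using X t0 by simp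
      moreover have "C * t = 4 * t + (4 * L * (A * (2 * A + 8))) * t" unfolding C_def by (simp add: distrib_right)
      ultimately have "t * 4 \<le> C * t" by linarith
      moreover have "4 * L * \<delta> * (A * (2 * A + 8) * (ln (real n))\<^sup>2) \<le> C * (\<delta> * (ln (real n))\<^sup>2)"
      proof -
        have "4 * L * \<delta> * (A * (2 * A + 8) * (ln (real n))\<^sup>2) = (4 * L * (A * (2 * A + 8))) * (\<delta> * (ln (real n))\<^sup>2)"
          by (simp add: mult_ac)
        also have "\<dots> \<le> C * (\<delta> * (ln (real n))\<^sup>2)" unfolding C_def using d0
          by (intro mult_right_mono) auto
        finally show ?thesis .
      qed
      ultimately show ?thesis by (simp add: distrib_left)
    qed
    finally have EFb: "integral\<^sup>L (gauss_mat m n) Fb \<le> C * (\<delta> * (ln (real n))\<^sup>2 + t)" .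
    show ?thesis
    proof (cases "integrable (gauss_mat m n) (\<lambda>Z. SUP v\<in>M_nbr m n \<delta> t. minner m n Z v)")
      case True
      have "GW m n (M_nbr m n \<delta> t) \<le> integral\<^sup>L (gauss_mat m n) Fb"
        unfolding GW_def
      proof (rule integral_mono[OF True Fb_i])
        fix Z show "(SUP v\<in>M_nbr m n \<delta> t. minner m n Z v) \<le> Fb Z"
        proof (rule cSUP_least)
          show "M_nbr m n \<delta> t \<noteq> {}" using zero_in_M[OF d0 t0, of m n] by blast
        qed (rule pw)
      qed
      then show ?thesis using EFb by linarith
    next
      case False
      then have "GW m n (M_nbr m n \<delta> t) = 0" unfolding GW_def by (rule not_integrable_integral_eq)
      moreover have "C * (\<delta> * (ln (real n))\<^sup>2 + t) \<ge> 0" using C0 d0 t0 by (intro mult_nonneg_nonneg) auto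
      ultimately show ?thesis by simp
    qed
  qed
  show ?thesis by (rule exI[of _ C]) (use main in blast)
qed

end
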